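(* Let $(A,+,\circ)$ be a $*$-nilpotent skew brace of nilpotent type and let $I$ be a nonzero ideal of $A$. Then $\zeta(A)\cap I\neq 0$. In particular, if $A\neq 0$ then $\zeta(A)\neq0$.
   Context: A skew brace is a triple $(A,+,\circ)$ where $(A,+)$ and $(A,\circ)$ are groups (not necessarily abelian; $+$ is written additively) such that $x\circ(y+z)=(x\circ y)-x+(x\circ z)$ for all $x,y,z\in A$; the common neutral element is $0$. It is of nilpotent type if $(A,+)$ is nilpotent. Let $\lambda_x(y)=-x+(x\circ y)$ and $x*y=\lambda_x(y)-y$; $[x,y]_+=x+y-x-y$. For subsets $X,Y$, $X*Y$ is the subgroup of $(A,+)$ generated by $\{x*y\}$. Left and right series: $A^1=A$, $A^{n+1}=A*A^n$; $A^{(1)}=A$, $A^{(n+1)}=A^{(n)}*A$; $A$ is $*$-nilpotent if $A^n=0$ and $A^{(m)}=0$ for some $n,m$. An ideal is a subgroup $I$ of $(A,+)$ with $\lambda_a(I)\subseteq I$ for all $a\in A$ that is normal in both $(A,+)$ and $(A,\circ)$. The center is $\zeta(A)=\{x\in A: x*y=y*x=[x,y]_+=0\ \forall y\in A\}$. *)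

theory Defs
  imports "HOL-Algebra.Algebra"
begin

text \<open>A skew brace is given by a carrier set A, an additive operation plus_op (not necessarily
commutative), a circle operation circ and the common neutral element z.\<close>

definition add_grp :: "'a set \<Rightarrow> ('a \<Rightarrow> 'a \<Rightarrow> 'a) \<Rightarrow> 'a \<Rightarrow> 'a monoid" where
  "add_grp A plus_op z = \<lparr>carrier = A, monoid.mult = plus_op, one = z\<rparr>"

definition circ_grp :: "'a set \<Rightarrow> ('a \<Rightarrow> 'a \<Rightarrow> 'a) \<Rightarrow> 'a \<Rightarrow> 'a monoid" where
  "circ_grp A circ z = \<lparr>carrier = A, monoid.mult = circ, one = z\<rparr>"

definition neg :: "'a set \<Rightarrow> ('a \<Rightarrow> 'a \<Rightarrow> 'a) \<Rightarrow> 'a \<Rightarrow> 'a \<Rightarrow> 'a" where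
  "neg A plus_op z x = inv\<^bsub>add_grp A plus_op z\<^esub> x"

definition skew_brace :: "'a set \<Rightarrow> ('a \<Rightarrow> 'a \<Rightarrow> 'a) \<Rightarrow> ('a \<Rightarrow> 'a \<Rightarrow> 'a) \<Rightarrow> 'a \<Rightarrow> bool" where
  "skew_brace A plus_op circ z \<longleftrightarrow>
     group (add_grp A plus_op z) \<and> group (circ_grp A circ z) \<and>
     (\<forall>x\<in>A. \<forall>y\<in>A. \<forall>w\<in>A.
        circ x (plus_op y w) = plus_op (plus_op (circ x y) (neg A plus_op z x)) (circ x w))"

definition lam :: "'a set \<Rightarrow> ('a \<Rightarrow> 'a \<Rightarrow> 'a) \<Rightarrow> ('a \<Rightarrow> 'a \<Rightarrow> 'a) \<Rightarrow> 'a \<Rightarrow> 'a \<Rightarrow> 'a \<Rightarrow> 'a" where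
  "lam A plus_op circ z x y = plus_op (neg A plus_op z x) (circ x y)"

definition star :: "'a set \<Rightarrow> ('a \<Rightarrow> 'a \<Rightarrow> 'a) \<Rightarrow> ('a \<Rightarrow> 'a \<Rightarrow> 'a) \<Rightarrow> 'a \<Rightarrow> 'a \<Rightarrow> 'a \<Rightarrow> 'a" where
  "star A plus_op circ z x y = plus_op (lam A plus_op circ z x y) (neg A plus_op z y)"

definition acomm :: "'a set \<Rightarrow> ('a \<Rightarrow> 'a \<Rightarrow> 'a) \<Rightarrow> 'a \<Rightarrow> 'a \<Rightarrow> 'a \<Rightarrow> 'a" where
  "acomm A plus_op z x y = plus_op (plus_op (plus_op x y) (neg A plus_op z x)) (neg A plus_op z y)"

definition star_set :: "'a set \<Rightarrow> ('a \<Rightarrow> 'a \<Rightarrow> 'a) \<Rightarrow> ('a \<Rightarrow> 'a \<Rightarrow> 'a) \<Rightarrow> 'a \<Rightarrow> 'a set \<Rightarrow> 'a set \<Rightarrow> 'a set" where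
  "star_set A plus_op circ z S1 S2 =
     generate (add_grp A plus_op z) {star A plus_op circ z x y | x y. x \<in> S1 \<and> y \<in> S2}"

text \<open>Left series: left_series n = A^(n+1); right series: right_series n = A^((n+1)).\<close>
fun left_series :: "'a set \<Rightarrow> ('a \<Rightarrow> 'a \<Rightarrow> 'a) \<Rightarrow> ('a \<Rightarrow> 'a \<Rightarrow> 'a) \<Rightarrow> 'a \<Rightarrow> nat \<Rightarrow> 'a set" where
  "left_series A plus_op circ z 0 = A"
| "left_series A plus_op circ z (Suc n) = star_set A plus_op circ z A (left_series A plus_op circ z n)"

fun right_series :: "'a set \<Rightarrow> ('a \<Rightarrow> 'a \<Rightarrow> 'a) \<Rightarrow> ('a \<Rightarrow> 'a \<Rightarrow> 'a) \<Rightarrow> 'a \<Rightarrow> nat \<Rightarrow> 'a set" where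
  "right_series A plus_op circ z 0 = A"
| "right_series A plus_op circ z (Suc n) = star_set A plus_op circ z (right_series A plus_op circ z n) A"

definition star_nilpotent :: "'a set \<Rightarrow> ('a \<Rightarrow> 'a \<Rightarrow> 'a) \<Rightarrow> ('a \<Rightarrow> 'a \<Rightarrow> 'a) \<Rightarrow> 'a \<Rightarrow> bool" where
  "star_nilpotent A plus_op circ z \<longleftrightarrow>
     (\<exists>n. left_series A plus_op circ z n = {z}) \<and> (\<exists>m. right_series A plus_op circ z m = {z})"

fun lower_central :: "'a set \<Rightarrow> ('a \<Rightarrow> 'a \<Rightarrow> 'a) \<Rightarrow> 'a \<Rightarrow> nat \<Rightarrow> 'a set" where
  "lower_central A plus_op z 0 = A"
| "lower_central A plus_op z (Suc n) =
     generate (add_grp A plus_op z) {acomm A plus_op z x y | x y. x \<in> A \<and> y \<in> lower_central A plus_op z n}"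

definition nilpotent_type :: "'a set \<Rightarrow> ('a \<Rightarrow> 'a \<Rightarrow> 'a) \<Rightarrow> 'a \<Rightarrow> bool" where
  "nilpotent_type A plus_op z \<longleftrightarrow> (\<exists>n. lower_central A plus_op z n = {z})"

definition brace_ideal :: "'a set \<Rightarrow> ('a \<Rightarrow> 'a \<Rightarrow> 'a) \<Rightarrow> ('a \<Rightarrow> 'a \<Rightarrow> 'a) \<Rightarrow> 'a \<Rightarrow> 'a set \<Rightarrow> bool" where
  "brace_ideal A plus_op circ z I \<longleftrightarrow>
     subgroup I (add_grp A plus_op z) \<and>
     (\<forall>a\<in>A. lam A plus_op circ z a ` I \<subseteq> I) \<and>
     I \<lhd> add_grp A plus_op z \<and> I \<lhd> circ_grp A circ z"

definition brace_center :: "'a set \<Rightarrow> ('a \<Rightarrow> 'a \<Rightarrow> 'a) \<Rightarrow> ('a \<Rightarrow> 'a \<Rightarrow> 'a) \<Rightarrow> 'a \<Rightarrow> 'a set" where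
  "brace_center A plus_op circ z =
     {x \<in> A. \<forall>y\<in>A. star A plus_op circ z x y = z \<and> star A plus_op circ z y x = z \<and> acomm A plus_op z x y = z}"

end

theory Submission
  imports Defs
begin

locale sb =
  fixes A :: "'a set" and p :: "'a \<Rightarrow> 'a \<Rightarrow> 'a" and c :: "'a \<Rightarrow> 'a \<Rightarrow> 'a" and z :: 'a
  assumes SB: "skew_brace A p c z"
begin

abbreviation "G \<equiv> add_grp A p z"
abbreviation "C \<equiv> circ_grp A c z"
abbreviation "nn x \<equiv> neg A p z x"
abbreviation "la x y \<equiv> lam A p c z x y"
abbreviation "st x y \<equiv> star A p c z x y"
abbreviation "ci x \<equiv> inv\<^bsub>C\<^esub> x"

lemma G_simps[simp]: "carrier G = A" "monoid.mult G = p" "one G = z"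
  by (simp_all add: add_grp_def)
lemma C_simps[simp]: "carrier C = A" "monoid.mult C = c" "one C = z"
  by (simp_all add: circ_grp_def)

lemma grpG: "group G" using SB by (simp add: skew_brace_def)
lemma grpC: "group C" using SB by (simp add: skew_brace_def)

lemma dist: "x\<in>A \<Longrightarrow> y\<in>A \<Longrightarrow> w\<in>A \<Longrightarrow> c x (p y w) = p (p (c x y) (nn x)) (c x w)"
  using SB by (simp add: skew_brace_def)

lemma p_closed[simp]: "x\<in>A \<Longrightarrow> y\<in>A \<Longrightarrow> p x y \<in> A"
  using group.subgroup_self[OF grpG] by (metis G_simps group.is_monoid monoid.m_closed grpG)
lemma c_closed[simp]: "x\<in>A \<Longrightarrow> y\<in>A \<Longrightarrow> c x y \<in> A"
  by (metis C_simps group.is_monoid monoid.m_closed grpC)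
lemma z_in[simp]: "z \<in> A"
  by (metis G_simps group.is_monoid monoid.one_closed grpG)
lemma nn_closed[simp]: "x\<in>A \<Longrightarrow> nn x \<in> A"
  unfolding neg_def by (metis G_simps group.inv_closed grpG)
lemma ci_closed[simp]: "x\<in>A \<Longrightarrow> ci x \<in> A"
  by (metis C_simps group.inv_closed grpC)
lemma p_assoc[simp]: "x\<in>A \<Longrightarrow> y\<in>A \<Longrightarrow> w\<in>A \<Longrightarrow> p (p x y) w = p x (p y w)"
  by (metis G_simps group.is_monoid monoid.m_assoc grpG)
lemma c_assoc[simp]: "x\<in>A \<Longrightarrow> y\<in>A \<Longrightarrow> w\<in>A \<Longrightarrow> c (c x y) w = c x (c y w)"
  by (metis C_simps group.is_monoid monoid.m_assoc grpC)
lemma p_zl[simp]: "x\<in>A \<Longrightarrow> p z x = x"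
  by (metis G_simps group.is_monoid monoid.l_one grpG)
lemma p_zr[simp]: "x\<in>A \<Longrightarrow> p x z = x"
  by (metis G_simps group.is_monoid monoid.r_one grpG)
lemma c_zl[simp]: "x\<in>A \<Longrightarrow> c z x = x"
  by (metis C_simps group.is_monoid monoid.l_one grpC)
lemma c_zr[simp]: "x\<in>A \<Longrightarrow> c x z = x"
  by (metis C_simps group.is_monoid monoid.r_one grpC)
lemma p_linv[simp]: "x\<in>A \<Longrightarrow> p (nn x) x = z"
  unfolding neg_def by (metis G_simps group.l_inv grpG)
lemma p_rinv[simp]: "x\<in>A \<Longrightarrow> p x (nn x) = z"
  unfolding neg_def by (metis G_simps group.r_inv grpG)
lemma c_linv[simp]: "x\<in>A \<Longrightarrow> c (ci x) x = z"
  by (metis C_simps group.l_inv grpC)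
lemma c_rinv[simp]: "x\<in>A \<Longrightarrow> c x (ci x) = z"
  by (metis C_simps group.r_inv grpC)
lemma p_canc1[simp]: "x\<in>A \<Longrightarrow> y\<in>A \<Longrightarrow> p (nn x) (p x y) = y"
  by (metis p_assoc nn_closed p_linv p_zl)
lemma p_canc2[simp]: "x\<in>A \<Longrightarrow> y\<in>A \<Longrightarrow> p x (p (nn x) y) = y"
  by (metis p_assoc nn_closed p_rinv p_zl)
lemma c_canc1[simp]: "x\<in>A \<Longrightarrow> y\<in>A \<Longrightarrow> c (ci x) (c x y) = y"
  by (metis c_assoc ci_closed c_linv c_zl)
lemma c_canc2[simp]: "x\<in>A \<Longrightarrow> y\<in>A \<Longrightarrow> c x (c (ci x) y) = y"
  by (metis c_assoc ci_closed c_rinv c_zl)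
lemma nn_nn[simp]: "x\<in>A \<Longrightarrow> nn (nn x) = x"
  unfolding neg_def by (metis G_simps group.inv_inv grpG)
lemma nn_z[simp]: "nn z = z"
  by (metis p_rinv p_zl z_in nn_closed)
lemma nn_p[simp]: "x\<in>A \<Longrightarrow> y\<in>A \<Longrightarrow> nn (p x y) = p (nn y) (nn x)"
  unfolding neg_def by (metis G_simps group.inv_mult_group grpG)
lemma p_solve: "x\<in>A \<Longrightarrow> y\<in>A \<Longrightarrow> w\<in>A \<Longrightarrow> p x y = w \<longleftrightarrow> y = p (nn x) w"
  by auto

lemma la_def': "la x y = p (nn x) (c x y)" by (simp add: lam_def)
lemma la_closed[simp]: "x\<in>A \<Longrightarrow> y\<in>A \<Longrightarrow> la x y \<in> A" by (simp add: lam_def)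
lemma c_la: "x\<in>A \<Longrightarrow> y\<in>A \<Longrightarrow> c x y = p x (la x y)" by (simp add: lam_def)
lemma la_add: "x\<in>A \<Longrightarrow> y\<in>A \<Longrightarrow> w\<in>A \<Longrightarrow> la x (p y w) = p (la x y) (la x w)"
  by (simp add: lam_def dist)
lemma la_z[simp]: "x\<in>A \<Longrightarrow> la x z = z" by (simp add: lam_def)
lemma la_zl[simp]: "y\<in>A \<Longrightarrow> la z y = y" by (simp add: lam_def)
lemma c_neg: "x\<in>A \<Longrightarrow> y\<in>A \<Longrightarrow> c x (nn y) = p (p x (nn (c x y))) x"
proof -
  assume a: "x\<in>A" "y\<in>A"
  have "x = c x (p y (nn y))" using a by simp
  also have "\<dots> = p (p (c x y) (nn x)) (c x (nn y))" using a dist nn_closed by blast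
  finally have e: "x = p (c x y) (p (nn x) (c x (nn y)))" using a by simp
  hence "p (nn (c x y)) x = p (nn x) (c x (nn y))" using a by (simp add: p_solve)
  hence "c x (nn y) = p x (p (nn (c x y)) x)" using a by (metis p_canc2 nn_closed c_closed p_closed)
  thus ?thesis using a by simp
qed
lemma la_comp: "x\<in>A \<Longrightarrow> y\<in>A \<Longrightarrow> w\<in>A \<Longrightarrow> la (c x y) w = la x (la y w)"
  by (simp add: lam_def dist c_neg)

lemma inv_G[simp]: "inv\<^bsub>G\<^esub> x = nn x" by (simp add: neg_def)

lemma st_def': "st x y = p (la x y) (nn y)" by (simp add: star_def)
lemma st_closed[simp]: "x\<in>A \<Longrightarrow> y\<in>A \<Longrightarrow> st x y \<in> A" by (simp add: star_def)
lemma st_zero_iff: "x\<in>A \<Longrightarrow> y\<in>A \<Longrightarrow> st x y = z \<longleftrightarrow> la x y = y"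
  by (simp add: star_def p_solve) (metis nn_closed la_closed nn_nn p_linv p_solve p_zl p_zr)

lemma st_add: "x\<in>A \<Longrightarrow> y\<in>A \<Longrightarrow> w\<in>A \<Longrightarrow> st x (p y w) = p (p (p (st x y) y) (st x w)) (nn y)"
  by (simp add: star_def la_add)
lemma st_conj: "x\<in>A \<Longrightarrow> a\<in>A \<Longrightarrow> b\<in>A \<Longrightarrow> p (p a (st x b)) (nn a) = p (nn (st x a)) (st x (p a b))"
  by (simp add: st_add del: nn_p)

lemma gen_sub: "S \<subseteq> A \<Longrightarrow> subgroup (generate G S) G"
  using group.generate_is_subgroup[OF grpG] by simp
lemma gen_le: "S \<subseteq> H \<Longrightarrow> subgroup H G \<Longrightarrow> generate G S \<subseteq> H"
  using group.generate_subgroup_incl[OF grpG] by blast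
lemma gen_mono: "S \<subseteq> T \<Longrightarrow> generate G S \<subseteq> generate G T"
  using group.mono_generate[OF grpG] by blast
lemma gen_A: "S \<subseteq> A \<Longrightarrow> generate G S \<subseteq> A"
  using group.generate_incl[OF grpG] by simp
lemma gen_inv: "S \<subseteq> A \<Longrightarrow> h \<in> generate G S \<Longrightarrow> nn h \<in> generate G S"
  using group.generate_m_inv_closed[OF grpG] by simp
lemma gen_z: "z \<in> generate G S"
  using generate.one[of G S] by simp
lemma gen_p: "h1 \<in> generate G S \<Longrightarrow> h2 \<in> generate G S \<Longrightarrow> p h1 h2 \<in> generate G S"
  using generate.eng[of h1 G S h2] by simp

lemma gen_normal:
  assumes S: "S \<subseteq> A" and cj: "\<And>h g. h\<in>S \<Longrightarrow> g\<in>A \<Longrightarrow> p (p g h) (nn g) \<in> generate G S"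
  shows "generate G S \<lhd> G"
proof -
  have "\<And>g h. g\<in>A \<Longrightarrow> h \<in> generate G S \<Longrightarrow> p (p g h) (nn g) \<in> generate G S"
  proof -
    fix g h assume g: "g\<in>A" and h: "h \<in> generate G S"
    from h show "p (p g h) (nn g) \<in> generate G S"
    proof (induct h rule: generate.induct)
      case one thus ?case using g gen_z by simp
    next
      case (incl h) thus ?case using cj g by blast
    next
      case (inv h)
      have hA: "h \<in> A" using inv S by auto
      have "p (p g (nn h)) (nn g) = nn (p (p g h) (nn g))" using hA g by simp
      thus ?case using gen_inv[OF S cj[OF inv g]] by simp
    next
      case (eng h1 h2)
      have hA: "h1 \<in> A" "h2 \<in> A" using eng gen_A[OF S] by auto
      have "p (p g (p h1 h2)) (nn g) = p (p (p g h1) (nn g)) (p (p g h2) (nn g))" using hA g by simp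
      thus ?case using gen_p[OF eng(2) eng(4)] by simp
    qed
  qed
  thus ?thesis using group.normal_invI[OF grpG gen_sub[OF S]] by simp
qed

lemma star_set_A: "U \<subseteq> A \<Longrightarrow> Y \<subseteq> A \<Longrightarrow> star_set A p c z U Y \<subseteq> A"
  unfolding star_set_def apply (intro gen_A) using st_closed by blast

lemma star_set_normal: "U \<subseteq> A \<Longrightarrow> star_set A p c z U A \<lhd> G"
  unfolding star_set_def
proof (rule gen_normal)
  assume U: "U \<subseteq> A"
  show "{st x y |x y. x \<in> U \<and> y \<in> A} \<subseteq> A" using U by auto
  fix h g assume h: "h \<in> {st x y |x y. x \<in> U \<and> y \<in> A}" and g: "g \<in> A"
  then obtain x y where xy: "h = st x y" "x\<in>U" "y\<in>A" by auto
  have xA: "x \<in> A" using xy U by auto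
  have e: "p (p g h) (nn g) = p (nn (st x g)) (st x (p g y))" using xy xA g st_conj by simp
  have "st x g \<in> generate G {st x y |x y. x \<in> U \<and> y \<in> A}" using xy g by (intro generate.incl) blast
  moreover have "st x (p g y) \<in> generate G {st x y |x y. x \<in> U \<and> y \<in> A}" using xy g xA p_closed by (intro generate.incl) blast
  ultimately show "p (p g h) (nn g) \<in> generate G {st x y |x y. x \<in> U \<and> y \<in> A}"
    unfolding e using U xA g by (intro gen_p gen_inv) auto
qed

lemma ideal_props:
  assumes "brace_ideal A p c z I"
  shows "subgroup I G" "I \<subseteq> A" "I \<lhd> G" "I \<lhd> C" "\<And>a x. a\<in>A \<Longrightarrow> x\<in>I \<Longrightarrow> la a x \<in> I"
  using assms subgroup.subset[of I G] unfolding brace_ideal_def by auto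

lemma sgI: "subgroup H G \<Longrightarrow> x\<in>H \<Longrightarrow> y\<in>H \<Longrightarrow> p x y \<in> H"
  using subgroup.m_closed[of H G] by simp
lemma sgN: "subgroup H G \<Longrightarrow> x\<in>H \<Longrightarrow> nn x \<in> H"
  using subgroup.m_inv_closed[of H G] by simp
lemma nconj: "H \<lhd> G \<Longrightarrow> g\<in>A \<Longrightarrow> x\<in>H \<Longrightarrow> p (p g x) (nn g) \<in> H"
  using normal.inv_op_closed2[of H G] by simp

lemma ideal_st_right:
  assumes I: "brace_ideal A p c z I" and y: "y\<in>I" and a: "a\<in>A"
  shows "st y a \<in> I"
proof -
  note ip = ideal_props[OF I]
  have yA: "y\<in>A" using y ip by auto
  define y' where "y' = c (c (ci a) y) a"
  have y'I: "y' \<in> I" using normal.inv_op_closed1[OF ip(4), of a y] a y unfolding y'_def by simp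
  have y'A: "y' \<in> A" using y'I ip by auto
  have e1: "c y a = p a (la a y')" using a yA unfolding y'_def by (simp add: c_la[symmetric])
  have "st y a = p (p (nn y) (c y a)) (nn a)" by (simp add: star_def lam_def)
  also have "\<dots> = p (nn y) (p (p a (la a y')) (nn a))" using e1 a yA y'A by simp
  finally have "st y a = p (nn y) (p (p a (la a y')) (nn a))" .
  moreover have "p (p a (la a y')) (nn a) \<in> I" using nconj[OF ip(3) a ip(5)[OF a y'I]] .
  ultimately show ?thesis using sgI[OF ip(1) sgN[OF ip(1) y]] by simp
qed

lemma p_rsolve: "u\<in>A \<Longrightarrow> v\<in>A \<Longrightarrow> w\<in>A \<Longrightarrow> p u (nn v) = w \<longleftrightarrow> u = p w v"
proof
  assume a: "u\<in>A" "v\<in>A" "w\<in>A" "p u (nn v) = w"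
  have "u = p (p u (nn v)) v" using a(1,2) by simp
  thus "u = p w v" unfolding a(4) .
qed simp

lemma acomm_z: "a\<in>A \<Longrightarrow> x\<in>A \<Longrightarrow> acomm A p z a x = z \<longleftrightarrow> p a x = p x a"
  unfolding acomm_def by (simp add: p_rsolve del: p_assoc)

lemma last_nz: "\<exists>x\<in>F 0. x \<noteq> (z::'a) \<Longrightarrow> F m \<subseteq> {z} \<Longrightarrow> \<exists>k. (\<exists>x\<in>F k. x \<noteq> z) \<and> F (Suc k) \<subseteq> {z}"
proof (induct m)
  case 0 thus ?case by auto
next
  case (Suc m) thus ?case by (cases "F m \<subseteq> {z}") auto
qed

lemma soc_exists:
  assumes I: "brace_ideal A p c z I" and nz: "\<exists>x\<in>I. x \<noteq> z"
    and R: "right_series A p c z m = {z}" and L: "lower_central A p z n = {z}"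
  shows "\<exists>x\<in>I. x \<noteq> z \<and> (\<forall>a\<in>A. st x a = z) \<and> (\<forall>a\<in>A. p a x = p x a)"
proof -
  note ip = ideal_props[OF I]
  define Y where "Y = rec_nat I (\<lambda>_ Yk. star_set A p c z Yk A)"
  have Y0: "Y 0 = I" and YS: "\<And>k. Y (Suc k) = star_set A p c z (Y k) A" by (simp_all add: Y_def)
  have Yp: "Y k \<subseteq> I \<and> Y k \<subseteq> right_series A p c z k" for k
  proof (induct k)
    case 0 thus ?case using Y0 ip by simp
  next
    case (Suc k)
    have "Y (Suc k) \<subseteq> I" unfolding YS star_set_def
      using Suc ip(1) ideal_st_right[OF I] by (intro gen_le) auto
    moreover have "Y (Suc k) \<subseteq> right_series A p c z (Suc k)" unfolding YS star_set_def right_series.simps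
      using Suc by (intro gen_mono) blast
    ultimately show ?case by blast
  qed
  have Yn: "Y k \<lhd> G" for k
  proof (cases k)
    case 0 thus ?thesis using Y0 ip by simp
  next
    case (Suc k')
    have "Y k' \<subseteq> A" using Yp[of k'] ip(2) by blast
    thus ?thesis using Suc YS star_set_normal by simp
  qed
  have "Y m \<subseteq> {z}" using Yp R by blast
  then obtain k where k1: "\<exists>x\<in>Y k. x \<noteq> z" and k2: "Y (Suc k) \<subseteq> {z}"
    using last_nz[of Y m] nz Y0 by blast
  have stz: "st x a = z" if "x \<in> Y k" "a \<in> A" for x a
  proof -
    have "st x a \<in> Y (Suc k)" unfolding YS star_set_def using that by (intro generate.incl) blast
    thus ?thesis using k2 by blast
  qed
  have YkA: "Y k \<subseteq> A" using Yp ip(2) by blast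
  have Yks: "subgroup (Y k) G" using Yn[of k] normal_imp_subgroup by blast
  define W where "W = rec_nat (Y k) (\<lambda>_ Wj. generate G {acomm A p z a w | a w. a \<in> A \<and> w \<in> Wj})"
  have W0: "W 0 = Y k" and WS: "\<And>j. W (Suc j) = generate G {acomm A p z a w | a w. a \<in> A \<and> w \<in> W j}"
    by (simp_all add: W_def)
  have Wp: "W j \<subseteq> Y k \<and> W j \<subseteq> lower_central A p z j" for j
  proof (induct j)
    case 0 thus ?case using W0 YkA by simp
  next
    case (Suc j)
    have "acomm A p z a w \<in> Y k" if "a\<in>A" "w \<in> Y k" for a w
    proof -
      have wA: "w \<in> A" using that YkA by blast
      have "p (p a w) (nn a) \<in> Y k" using nconj[OF Yn that(1) that(2)] .
      hence "p (p (p a w) (nn a)) (nn w) \<in> Y k" using sgI[OF Yks _ sgN[OF Yks that(2)]] by blast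
      thus ?thesis unfolding acomm_def .
    qed
    hence "W (Suc j) \<subseteq> Y k" unfolding WS using Suc Yks by (intro gen_le) auto
    moreover have "W (Suc j) \<subseteq> lower_central A p z (Suc j)" unfolding WS lower_central.simps
      using Suc by (intro gen_mono) blast
    ultimately show ?case by blast
  qed
  have "W n \<subseteq> {z}" using Wp L by blast
  then obtain j where j1: "\<exists>x\<in>W j. x \<noteq> z" and j2: "W (Suc j) \<subseteq> {z}"
    using last_nz[of W n] k1 W0 by blast
  then obtain x where x: "x \<in> W j" "x \<noteq> z" by blast
  have xY: "x \<in> Y k" using x Wp by blast
  have xA: "x \<in> A" using xY YkA by blast
  have "p a x = p x a" if "a \<in> A" for a
  proof -
    have "acomm A p z a x \<in> W (Suc j)" unfolding WS using that x by (intro generate.incl) blast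
    thus ?thesis using j2 acomm_z[OF that xA] by blast
  qed
  moreover have "x \<in> I" using xY Yp by blast
  ultimately show ?thesis using x stz[OF xY] by blast
qed

lemma ker_c: "x\<in>A \<Longrightarrow> \<forall>a\<in>A. la x a = a \<Longrightarrow> y\<in>A \<Longrightarrow> c x y = p x y"
  by (simp add: c_la)

lemma center_exists:
  assumes I: "brace_ideal A p c z I" and x0: "x0 \<in> I" "x0 \<noteq> z" "\<forall>a\<in>A. st x0 a = z" "\<forall>a\<in>A. p a x0 = p x0 a"
    and L: "left_series A p c z n = {z}"
  shows "\<exists>x\<in>I. x \<noteq> z \<and> x \<in> brace_center A p c z"
proof -
  note ip = ideal_props[OF I]
  define S where "S = {x \<in> I. (\<forall>a\<in>A. la x a = a) \<and> (\<forall>a\<in>A. p a x = p x a)}"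
  have SI: "S \<subseteq> I" and SA: "S \<subseteq> A" using ip unfolding S_def by auto
  have Sinv: "nn x \<in> S" if x: "x \<in> S" for x
  proof -
    have xA: "x \<in> A" using x SA by blast
    have k: "\<forall>a\<in>A. la x a = a" and cm: "\<forall>a\<in>A. p a x = p x a" using x unfolding S_def by auto
    have "nn x \<in> I" using sgN[OF ip(1)] x SI by blast
    moreover have "la (nn x) a = a" if a: "a\<in>A" for a
    proof -
      have cz: "c x (nn x) = z" using ker_c[OF xA k] xA by simp
      have "la x (la (nn x) a) = a" using la_comp[of x "nn x" a] cz xA a by simp
      thus ?thesis using k xA a by simp
    qed
    moreover have "p a (nn x) = p (nn x) a" if a: "a\<in>A" for a
    proof -
      have "p (nn x) a = p (nn x) (p (p a x) (nn x))" using a xA by simp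
      also have "\<dots> = p (nn x) (p (p x a) (nn x))" using cm a by simp
      also have "\<dots> = p a (nn x)" using a xA by simp
      finally show ?thesis by simp
    qed
    ultimately show ?thesis unfolding S_def by blast
  qed
  have Smul: "p x y \<in> S" if x: "x \<in> S" and y: "y \<in> S" for x y
  proof -
    have xA: "x \<in> A" and yA: "y\<in>A" using x y SA by blast+
    have kx: "\<forall>a\<in>A. la x a = a" and cx: "\<forall>a\<in>A. p a x = p x a" using x unfolding S_def by auto
    have ky: "\<forall>a\<in>A. la y a = a" and cy: "\<forall>a\<in>A. p a y = p y a" using y unfolding S_def by auto
    have "p x y \<in> I" using sgI[OF ip(1)] x y SI by blast
    moreover have "la (p x y) a = a" if a: "a\<in>A" for a
      using la_comp[of x y a] ker_c[OF xA kx yA] kx ky a xA yA by simp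
    moreover have "p a (p x y) = p (p x y) a" if a: "a\<in>A" for a
    proof -
      have "p a (p x y) = p (p a x) y" using a xA yA by simp
      also have "\<dots> = p x (p a y)" using cx a xA yA by simp
      also have "\<dots> = p (p x y) a" using cy a xA yA by (metis p_assoc)
      finally show ?thesis .
    qed
    ultimately show ?thesis unfolding S_def by blast
  qed
  have x0S: "x0 \<in> S" using x0 ip st_zero_iff unfolding S_def by blast
  have Ssub: "subgroup S G"
    using SA x0S Sinv Smul by (intro group.subgroupI[OF grpG]) auto
  have Sla: "la a x \<in> S" if a: "a\<in>A" and x: "x\<in>S" for a x
  proof -
    have xA: "x \<in> A" using x SA by blast
    have k: "\<forall>a\<in>A. la x a = a" and cm: "\<forall>a\<in>A. p a x = p x a" using x unfolding S_def by auto
    have cm2: "p b (la a x) = p (la a x) b" if b: "b\<in>A" for b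
    proof -
      define b' where "b' = la (ci a) b"
      have b'A: "b' \<in> A" using a b unfolding b'_def by simp
      have bb: "la a b' = b" using la_comp[of a "ci a" b] a b unfolding b'_def by simp
      have "p (la a x) b = la a (p x b')" using la_add a xA b'A bb by simp
      also have "\<dots> = la a (p b' x)" using cm b'A by simp
      also have "\<dots> = p b (la a x)" using la_add a xA b'A bb by simp
      finally show ?thesis by simp
    qed
    have e: "c (c a x) (ci a) = la a x"
    proof -
      have "c (c a x) (ci a) = c a (p x (ci a))" using ker_c[OF xA k] a xA by simp
      also have "\<dots> = p (p (c a x) (nn a)) z" using dist a xA by simp
      also have "\<dots> = p (p a (la a x)) (nn a)" using c_la a xA by simp
      also have "\<dots> = la a x" using cm2[OF a] a xA by (simp del: p_assoc) (simp add: p_assoc)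
      finally show ?thesis .
    qed
    have "la (la a x) w = w" if w: "w \<in> A" for w
    proof -
      have "la (la a x) w = la a (la x (la (ci a) w))" unfolding e[symmetric]
        using la_comp a xA w by simp
      also have "\<dots> = la a (la (ci a) w)" using k a w by simp
      also have "\<dots> = w" using la_comp[of a "ci a" w] a w by simp
      finally show ?thesis .
    qed
    moreover have "la a x \<in> I" using ip(5) a x SI by blast
    ultimately show ?thesis unfolding S_def using cm2 by auto
  qed
  have Sst: "st a x \<in> S" if "a\<in>A" "x\<in>S" for a x
    unfolding star_def using sgI[OF Ssub Sla[OF that] sgN[OF Ssub that(2)]] .
  define Q where "Q = rec_nat S (\<lambda>_ Xk. star_set A p c z A Xk)"
  have Q0: "Q 0 = S" and QS: "\<And>k. Q (Suc k) = star_set A p c z A (Q k)" by (simp_all add: Q_def)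
  have Qp: "Q k \<subseteq> S \<and> Q k \<subseteq> left_series A p c z k" for k
  proof (induct k)
    case 0 thus ?case using Q0 SA by simp
  next
    case (Suc k)
    have "Q (Suc k) \<subseteq> S" unfolding QS star_set_def
      using Suc Ssub Sst by (intro gen_le) auto
    moreover have "Q (Suc k) \<subseteq> left_series A p c z (Suc k)" unfolding QS star_set_def left_series.simps
      using Suc by (intro gen_mono) blast
    ultimately show ?case by blast
  qed
  have "Q n \<subseteq> {z}" using Qp L by blast
  then obtain k where k1: "\<exists>x\<in>Q k. x \<noteq> z" and k2: "Q (Suc k) \<subseteq> {z}"
    using last_nz[of Q n] x0 x0S Q0 by blast
  then obtain x where x: "x \<in> Q k" "x \<noteq> z" by blast
  have xS: "x \<in> S" using x Qp by blast
  have xA: "x \<in> A" using xS SA by blast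
  have "st a x = z" if "a \<in> A" for a
  proof -
    have "st a x \<in> Q (Suc k)" unfolding QS star_set_def using that x by (intro generate.incl) blast
    thus ?thesis using k2 by blast
  qed
  moreover have "st x a = z" "acomm A p z x a = z" if "a \<in> A" for a
    using xS that xA st_zero_iff acomm_z unfolding S_def by auto
  ultimately have "x \<in> brace_center A p c z" unfolding brace_center_def using xA by blast
  thus ?thesis using x xS SI by blast
qed

lemma ideal_A: "brace_ideal A p c z A"
  unfolding brace_ideal_def
  using group.subgroup_self[OF grpG] group.normal_self[OF grpG] group.normal_self[OF grpC] by auto

lemma main:
  assumes N: "nilpotent_type A p z" and SN: "star_nilpotent A p c z"
  shows "(\<forall>I. brace_ideal A p c z I \<and> I \<noteq> {z} \<longrightarrow> brace_center A p c z \<inter> I \<noteq> {z})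
         \<and> (A \<noteq> {z} \<longrightarrow> brace_center A p c z \<noteq> {z})"
proof -
  obtain n where L: "left_series A p c z n = {z}" using SN unfolding star_nilpotent_def by blast
  obtain m where R: "right_series A p c z m = {z}" using SN unfolding star_nilpotent_def by blast
  obtain k where K: "lower_central A p z k = {z}" using N unfolding nilpotent_type_def by blast
  have *: "brace_center A p c z \<inter> I \<noteq> {z}" if I: "brace_ideal A p c z I" and nz: "I \<noteq> {z}" for I
  proof -
    have "z \<in> I" using subgroup.one_closed[of I G] ideal_props(1)[OF I] by simp
    hence "\<exists>x\<in>I. x \<noteq> z" using nz by blast
    then obtain x0 where "x0\<in>I" "x0 \<noteq> z" "\<forall>a\<in>A. st x0 a = z" "\<forall>a\<in>A. p a x0 = p x0 a"
      using soc_exists[OF I _ R K] by blast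
    then obtain x where "x\<in>I" "x \<noteq> z" "x \<in> brace_center A p c z"
      using center_exists[OF I _ _ _ _ L] by blast
    thus ?thesis by blast
  qed
  have "brace_center A p c z \<subseteq> A" unfolding brace_center_def by blast
  thus ?thesis using * ideal_A by (metis inf.absorb1)
qed

end

theorem mainTheorem7:
  fixes A :: "'a set" and plus_op circ :: "'a \<Rightarrow> 'a \<Rightarrow> 'a" and z :: 'a
  assumes "skew_brace A plus_op circ z"
    and "nilpotent_type A plus_op z"
    and "star_nilpotent A plus_op circ z"
  shows "(\<forall>I. brace_ideal A plus_op circ z I \<and> I \<noteq> {z} \<longrightarrow> brace_center A plus_op circ z \<inter> I \<noteq> {z})
         \<and> (A \<noteq> {z} \<longrightarrow> brace_center A plus_op circ z \<noteq> {z})"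
  using sb.main[OF sb.intro[OF assms(1)] assms(2,3)] .

end
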